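(* Let $k\ge 2$ and let $G$ be a connected graph with vertex set $\{1,\ldots,n\}$, $n\ge 2$, such that for every $i=1,\ldots,n-1$ there are at most two edges $(u,v)$ of $G$ with $u\le i<v$, and such that exactly $k$ vertices of $G$ are separating with respect to this numbering. Then $G$ is a subgraph of some chain of $k-1$ cycles $Z_1,\ldots,Z_{k-1}$ with distinguished vertices $a_j,b_j$ in which $a_1=1$ and $b_{k-1}=n$.
   Context: For a graph with vertex set $\{1,\ldots,n\}$, a vertex $i$ is called separating if there is no edge $(u,v)$ of the graph with $u<i<v$; otherwise it is non-separating. A chain of $m$ cycles is a union of $m$ cycles $Z_1,\ldots,Z_m$ together with vertices $a_j,b_j\in Z_j$ ($j=1,\ldots,m$) such that $Z_i\cap Z_j=\emptyset$ whenever $|i-j|>1$, and $Z_{j-1}\cap Z_j=\{b_{j-1}\}=\{a_j\}$ for every $j=2,\ldots,m$. "Subgraph" means that $G$ is contained in the chain as a subgraph, with the vertex $1$ of $G$ equal to $a_1$ and the vertex $n$ of $G$ equal to $b_{k-1}$. *)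

theory Defs
  imports Main
begin

definition graph_on :: "nat \<Rightarrow> (nat \<Rightarrow> nat \<Rightarrow> bool) \<Rightarrow> bool" where
  "graph_on n E \<longleftrightarrow> (\<forall>u v. E u v \<longrightarrow> E v u) \<and> (\<forall>u. \<not> E u u)
      \<and> (\<forall>u v. E u v \<longrightarrow> u \<in> {1..n} \<and> v \<in> {1..n})"

definition connected_on :: "nat \<Rightarrow> (nat \<Rightarrow> nat \<Rightarrow> bool) \<Rightarrow> bool" where
  "connected_on n E \<longleftrightarrow> (\<forall>u\<in>{1..n}. \<forall>v\<in>{1..n}. (u, v) \<in> {(x, y). E x y}\<^sup>*)"

definition separating :: "(nat \<Rightarrow> nat \<Rightarrow> bool) \<Rightarrow> nat \<Rightarrow> bool" where
  "separating E i \<longleftrightarrow> \<not> (\<exists>u v. E u v \<and> u < i \<and> i < v)"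

text \<open>A cycle is given by a list of distinct vertices of length at least 3;
  consecutive vertices (cyclically) are adjacent.\<close>
definition is_cycle :: "'a list \<Rightarrow> bool" where
  "is_cycle c \<longleftrightarrow> distinct c \<and> length c \<ge> 3"

definition cycle_adj :: "'a list \<Rightarrow> 'a \<Rightarrow> 'a \<Rightarrow> bool" where
  "cycle_adj c u v \<longleftrightarrow> (\<exists>i<length c.
      (u = c ! i \<and> v = c ! ((i + 1) mod length c)) \<or>
      (v = c ! i \<and> u = c ! ((i + 1) mod length c)))"

text \<open>A chain of m cycles Z_0..Z_{m-1} (0-indexed) with distinguished vertices a_j, b_j.\<close>
definition chain_of_cycles ::
  "nat \<Rightarrow> 'a list list \<Rightarrow> (nat \<Rightarrow> 'a) \<Rightarrow> (nat \<Rightarrow> 'a) \<Rightarrow> bool" where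
  "chain_of_cycles m Z a b \<longleftrightarrow> length Z = m
     \<and> (\<forall>j<m. is_cycle (Z ! j) \<and> a j \<in> set (Z ! j) \<and> b j \<in> set (Z ! j))
     \<and> (\<forall>i<m. \<forall>j<m. (i + 1 < j \<or> j + 1 < i) \<longrightarrow> set (Z ! i) \<inter> set (Z ! j) = {})
     \<and> (\<forall>j. j + 1 < m \<longrightarrow> set (Z ! j) \<inter> set (Z ! (j + 1)) = {b j}
                         \<and> {b j} = {a (j + 1)})"

definition subgraph_of_chain ::
  "nat \<Rightarrow> (nat \<Rightarrow> nat \<Rightarrow> bool) \<Rightarrow> nat \<Rightarrow> 'a list list \<Rightarrow> (nat \<Rightarrow> 'a) \<Rightarrow> (nat \<Rightarrow> 'a) \<Rightarrow> bool" where
  "subgraph_of_chain n E m Z a b \<longleftrightarrow> (\<exists>f :: nat \<Rightarrow> 'a.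
      inj_on f {1..n} \<and> f 1 = a 0 \<and> f n = b (m - 1)
      \<and> (\<forall>u v. E u v \<longrightarrow> (\<exists>j<m. cycle_adj (Z ! j) (f u) (f v))))"

end

theory Submission
  imports Defs
begin

definition ladj :: "nat list \<Rightarrow> nat \<Rightarrow> nat \<Rightarrow> bool" where
 "ladj xs u v \<longleftrightarrow> (\<exists>p. Suc p < length xs \<and> ((xs!p = u \<and> xs!Suc p = v) \<or> (xs!p = v \<and> xs!Suc p = u)))"

lemma ladj_append: "ladj xs u v \<Longrightarrow> ladj (ys @ xs @ zs) u v"
proof -
  assume "ladj xs u v"
  then obtain p where p: "Suc p < length xs" "(xs!p = u \<and> xs!Suc p = v) \<or> (xs!p = v \<and> xs!Suc p = u)"
    unfolding ladj_def by blast
  have "(ys @ xs @ zs) ! (length ys + p) = xs ! p" using p by (simp add: nth_append)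
  moreover have "(ys @ xs @ zs) ! Suc (length ys + p) = xs ! Suc p" using p
    by (simp add: nth_append)
  ultimately show ?thesis unfolding ladj_def using p
    by (rule_tac x="length ys + p" in exI) auto
qed

lemma ladj_Cons: "ladj xs u v \<Longrightarrow> ladj (x # xs) u v"
  using ladj_append[of xs u v "[x]" "[]"] by simp

lemma ladj_rev: "ladj xs u v \<Longrightarrow> ladj (rev xs) u v"
proof -
  assume "ladj xs u v"
  then obtain p where p: "Suc p < length xs" "(xs!p = u \<and> xs!Suc p = v) \<or> (xs!p = v \<and> xs!Suc p = u)"
    unfolding ladj_def by blast
  define q where "q = length xs - Suc (Suc p)"
  have "rev xs ! q = xs ! Suc p" using p unfolding q_def by (simp add: rev_nth)
  moreover have "rev xs ! Suc q = xs ! p" using p unfolding q_def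
    by (simp add: rev_nth Suc_diff_Suc)
  moreover have "Suc q < length (rev xs)" using p unfolding q_def by simp
  ultimately show ?thesis unfolding ladj_def using p by blast
qed

lemma ladj_snoc: "ladj (xs @ [x]) u v \<Longrightarrow> ladj xs u v \<or> (xs \<noteq> [] \<and> ((u = last xs \<and> v = x) \<or> (u = x \<and> v = last xs)))"
proof -
  assume "ladj (xs @ [x]) u v"
  then obtain p where p: "Suc p < length xs + 1" "((xs@[x])!p = u \<and> (xs@[x])!Suc p = v) \<or> ((xs@[x])!p = v \<and> (xs@[x])!Suc p = u)"
    unfolding ladj_def by auto
  show ?thesis
  proof (cases "Suc p < length xs")
    case True
    then show ?thesis using p unfolding ladj_def by (auto simp: nth_append)
  next
    case False
    then have "Suc p = length xs" using p by simp
    then have ne: "xs \<noteq> []" by auto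
    have "p = length xs - 1" using \<open>Suc p = length xs\<close> by simp
    then have "(xs@[x])!p = last xs" using ne by (simp add: nth_append last_conv_nth)
    moreover have "(xs@[x])!Suc p = x" using \<open>Suc p = length xs\<close> by simp
    ultimately have "xs \<noteq> []" "(xs@[x])!p = last xs" "(xs@[x])!Suc p = x" using ne by auto
    then show ?thesis using p by auto
  qed
qed

lemma ladj_last: "xs \<noteq> [] \<Longrightarrow> ladj (xs @ [x] @ ys) (last xs) x"
proof -
  assume ne: "xs \<noteq> []"
  define p where "p = length xs - 1"
  have sp: "Suc p = length xs" using ne unfolding p_def by simp
  have "(xs @ [x] @ ys) ! p = xs ! p" using sp by (simp add: nth_append)
  also have "\<dots> = last xs" using ne unfolding p_def by (simp add: last_conv_nth)
  finally have 1: "(xs @ [x] @ ys) ! p = last xs" .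
  have 2: "(xs @ [x] @ ys) ! Suc p = x" using sp by (simp add: nth_append)
  have 3: "Suc p < length (xs @ [x] @ ys)" using sp by simp
  show ?thesis unfolding ladj_def using 1 2 3 by blast
qed

lemma ladj_hd: "ladj (x # y # ys) x y"
  unfolding ladj_def by (rule exI[of _ 0]) simp

lemma ladj_cycle: "ladj c u v \<Longrightarrow> cycle_adj c u v"
proof -
  assume "ladj c u v"
  then obtain p where p: "Suc p < length c" "(c!p = u \<and> c!Suc p = v) \<or> (c!p = v \<and> c!Suc p = u)"
    unfolding ladj_def by blast
  have "(p + 1) mod length c = Suc p" using p(1) by simp
  then show ?thesis unfolding cycle_adj_def using p by (intro exI[of _ p]) auto
qed

lemma cycle_wrap: "c \<noteq> [] \<Longrightarrow> cycle_adj c (last c) (hd c)"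
proof -
  assume ne: "c \<noteq> []"
  have 1: "c ! (length c - 1) = last c" using ne by (simp add: last_conv_nth)
  have 2: "((length c - 1) + 1) mod length c = 0" using ne by simp
  have 3: "c ! 0 = hd c" using ne by (simp add: hd_conv_nth)
  show ?thesis unfolding cycle_adj_def using 1 2 3 ne
    by (intro exI[of _ "length c - 1"]) auto
qed

lemma cycle_adj_sym: "cycle_adj c u v \<Longrightarrow> cycle_adj c v u"
  unfolding cycle_adj_def by blast

definition Inv :: "(nat \<Rightarrow> nat \<Rightarrow> bool) \<Rightarrow> nat \<Rightarrow> nat \<Rightarrow> nat list \<Rightarrow> nat list \<Rightarrow> bool" where
 "Inv E s i A B \<longleftrightarrow> A \<noteq> [] \<and> B \<noteq> [] \<and> last A = s \<and> last B = s \<and> distinct A \<and> distinct B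
   \<and> set A \<inter> set B = {s} \<and> set A \<union> set B = {s..i}
   \<and> (\<forall>u v. E u v \<and> s \<le> u \<and> u < v \<and> v \<le> i \<longrightarrow> ladj A u v \<or> ladj B u v)
   \<and> (\<forall>u v. E u v \<and> u \<le> i \<and> i < v \<longrightarrow> u = hd A \<or> u = hd B)
   \<and> (hd A \<noteq> hd B \<longrightarrow> (\<forall>v w. E (hd A) v \<and> E (hd A) w \<and> i < v \<and> i < w \<longrightarrow> v = w)
                      \<and> (\<forall>v w. E (hd B) v \<and> E (hd B) w \<and> i < v \<and> i < w \<longrightarrow> v = w))"

lemma InvD:
  assumes "Inv E s i A B"
  shows "A \<noteq> []" "B \<noteq> []" "last A = s" "last B = s" "distinct A" "distinct B"
    "set A \<inter> set B = {s}" "set A \<union> set B = {s..i}"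
    "\<And>u v. E u v \<Longrightarrow> s \<le> u \<Longrightarrow> u < v \<Longrightarrow> v \<le> i \<Longrightarrow> ladj A u v \<or> ladj B u v"
    "\<And>u v. E u v \<Longrightarrow> u \<le> i \<Longrightarrow> i < v \<Longrightarrow> u = hd A \<or> u = hd B"
    "\<And>v w. hd A \<noteq> hd B \<Longrightarrow> E (hd A) v \<Longrightarrow> E (hd A) w \<Longrightarrow> i < v \<Longrightarrow> i < w \<Longrightarrow> v = w"
    "\<And>v w. hd A \<noteq> hd B \<Longrightarrow> E (hd B) v \<Longrightarrow> E (hd B) w \<Longrightarrow> i < v \<Longrightarrow> i < w \<Longrightarrow> v = w"
  using assms unfolding Inv_def by blast+

lemma InvI:
  assumes "A \<noteq> []" "B \<noteq> []" "last A = s" "last B = s" "distinct A" "distinct B"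
    "set A \<inter> set B = {s}" "set A \<union> set B = {s..i}"
    "\<And>u v. E u v \<Longrightarrow> s \<le> u \<Longrightarrow> u < v \<Longrightarrow> v \<le> i \<Longrightarrow> ladj A u v \<or> ladj B u v"
    "\<And>u v. E u v \<Longrightarrow> u \<le> i \<Longrightarrow> i < v \<Longrightarrow> u = hd A \<or> u = hd B"
    "\<And>v w. hd A \<noteq> hd B \<Longrightarrow> E (hd A) v \<Longrightarrow> E (hd A) w \<Longrightarrow> i < v \<Longrightarrow> i < w \<Longrightarrow> v = w"
    "\<And>v w. hd A \<noteq> hd B \<Longrightarrow> E (hd B) v \<Longrightarrow> E (hd B) w \<Longrightarrow> i < v \<Longrightarrow> i < w \<Longrightarrow> v = w"
  shows "Inv E s i A B"
  unfolding Inv_def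
proof (intro conjI)
  show "\<forall>u v. E u v \<and> s \<le> u \<and> u < v \<and> v \<le> i \<longrightarrow> ladj A u v \<or> ladj B u v" using assms(9) by blast
  show "\<forall>u v. E u v \<and> u \<le> i \<and> i < v \<longrightarrow> u = hd A \<or> u = hd B" using assms(10) by blast
  show "hd A \<noteq> hd B \<longrightarrow> (\<forall>v w. E (hd A) v \<and> E (hd A) w \<and> i < v \<and> i < w \<longrightarrow> v = w)
                      \<and> (\<forall>v w. E (hd B) v \<and> E (hd B) w \<and> i < v \<and> i < w \<longrightarrow> v = w)" using assms(11,12) by blast
qed (rule assms)+

lemma Inv_swap: "Inv E s i A B \<Longrightarrow> Inv E s i B A"
proof -
  assume I: "Inv E s i A B"
  note d = I[unfolded Inv_def]
  have h1: "A \<noteq> [] \<and> B \<noteq> [] \<and> last A = s \<and> last B = s \<and> distinct A \<and> distinct B" using d by blast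
  have h2: "set A \<inter> set B = {s}" "set A \<union> set B = {s..i}" using d by blast+
  have h3: "\<forall>u v. E u v \<and> s \<le> u \<and> u < v \<and> v \<le> i \<longrightarrow> ladj A u v \<or> ladj B u v" using d by blast
  have h4: "\<forall>u v. E u v \<and> u \<le> i \<and> i < v \<longrightarrow> u = hd A \<or> u = hd B" using d by blast
  have h5: "hd A \<noteq> hd B \<longrightarrow> (\<forall>v w. E (hd A) v \<and> E (hd A) w \<and> i < v \<and> i < w \<longrightarrow> v = w)
                      \<and> (\<forall>v w. E (hd B) v \<and> E (hd B) w \<and> i < v \<and> i < w \<longrightarrow> v = w)" using d by blast
  have g2: "set B \<inter> set A = {s}" "set B \<union> set A = {s..i}" using h2 by (metis Int_commute, metis Un_commute)
  have g3: "\<forall>u v. E u v \<and> s \<le> u \<and> u < v \<and> v \<le> i \<longrightarrow> ladj B u v \<or> ladj A u v" using h3 by blast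
  have g4: "\<forall>u v. E u v \<and> u \<le> i \<and> i < v \<longrightarrow> u = hd B \<or> u = hd A" using h4 by blast
  have g5: "hd B \<noteq> hd A \<longrightarrow> (\<forall>v w. E (hd B) v \<and> E (hd B) w \<and> i < v \<and> i < w \<longrightarrow> v = w)
                      \<and> (\<forall>v w. E (hd A) v \<and> E (hd A) w \<and> i < v \<and> i < w \<longrightarrow> v = w)" using h5 by metis
  show ?thesis unfolding Inv_def using h1 g2 g3 g4 g5 by (intro conjI) blast+
qed


lemma card3: "finite S \<Longrightarrow> x \<in> S \<Longrightarrow> y \<in> S \<Longrightarrow> z \<in> S \<Longrightarrow> x \<noteq> y \<Longrightarrow> x \<noteq> z \<Longrightarrow> y \<noteq> z \<Longrightarrow> 3 \<le> card S"
proof -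
  assume a: "finite S" "x \<in> S" "y \<in> S" "z \<in> S" "x \<noteq> y" "x \<noteq> z" "y \<noteq> z"
  have "card {x,y,z} = 3" using a(5-7) by simp
  moreover have "{x,y,z} \<subseteq> S" using a(2-4) by blast
  then have "card {x,y,z} \<le> card S" using a(1) by (rule card_mono[rotated])
  ultimately show ?thesis by simp
qed

locale blk =
  fixes n :: nat and E :: "nat \<Rightarrow> nat \<Rightarrow> bool" and s t :: nat
  assumes G: "graph_on n E" and C: "connected_on n E"
    and cb: "\<forall>i\<in>{1..n-1}. card {(u, v). E u v \<and> u \<le> i \<and> i < v} \<le> 2"
    and s1: "1 \<le> s" and st: "s < t" and tn: "t \<le> n"
    and seps: "separating E s" and sept: "separating E t"
    and inner: "\<forall>i. s < i \<longrightarrow> i < t \<longrightarrow> \<not> separating E i"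
begin

lemma Gparts1: "\<forall>u v. E u v \<longrightarrow> E v u" using conjunct1[OF G[unfolded graph_on_def]] .
lemma Gparts2: "\<forall>u. \<not> E u u" using conjunct1[OF conjunct2[OF G[unfolded graph_on_def]]] .
lemma Gparts3: "\<forall>u v. E u v \<longrightarrow> u \<in> {1..n} \<and> v \<in> {1..n}"
  using conjunct2[OF conjunct2[OF G[unfolded graph_on_def]]] .
lemma Esym: "E u v \<Longrightarrow> E v u" by (rule Gparts1[rule_format])
lemma Eirr: "\<not> E u u" by (rule Gparts2[rule_format])
lemma Erng: "E u v \<Longrightarrow> 1 \<le> u \<and> u \<le> n \<and> 1 \<le> v \<and> v \<le> n"
proof -
  assume e: "E u v"
  have "u \<in> {1..n} \<and> v \<in> {1..n}" by (rule Gparts3[rule_format, OF e])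
  then show ?thesis by simp
qed

lemma three:
  assumes "1 \<le> i" "i < n"
    and "E a b" "a \<le> i" "i < b" "E c d" "c \<le> i" "i < d" "E e f" "e \<le> i" "i < f"
    and "(a,b) \<noteq> (c,d)" "(a,b) \<noteq> (e,f)" "(c,d) \<noteq> (e,f)"
  shows False
proof -
  let ?S = "{(u, v). E u v \<and> u \<le> i \<and> i < v}"
  have "?S \<subseteq> {1..n} \<times> {1..n}"
  proof (rule subsetI)
    fix p assume "p \<in> ?S"
    then obtain u v where uv: "p = (u, v)" "E u v" by blast
    from Erng[OF uv(2)] show "p \<in> {1..n} \<times> {1..n}" using uv(1) by simp
  qed
  then have fin: "finite ?S" by (rule finite_subset) simp
  have m: "(a,b) \<in> ?S" "(c,d) \<in> ?S" "(e,f) \<in> ?S" using assms(3-11) by blast+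
  have "3 \<le> card ?S" by (rule card3[OF fin m assms(12-14)])
  moreover have "i \<in> {1..n-1}" using assms(1,2) by simp
  then have "card ?S \<le> 2" using cb by blast
  ultimately show False by simp
qed

lemma jump: "s < i \<Longrightarrow> i < t \<Longrightarrow> \<exists>x y. E x y \<and> x < i \<and> i < y"
  using inner unfolding separating_def by blast

lemma hasnbr: "1 \<le> i \<Longrightarrow> i \<le> n \<Longrightarrow> \<exists>w. E i w"
proof -
  assume i: "1 \<le> i" "i \<le> n"
  obtain w where w: "w \<in> {1..n}" "w \<noteq> i"
  proof (cases "i = s")
    case True
    then show ?thesis using that[of t] s1 st tn by auto
  next
    case False
    then show ?thesis using that[of s] s1 st tn by auto
  qed
  have "(i, w) \<in> {(x, y). E x y}\<^sup>*" using C i w unfolding connected_on_def by auto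
  then show ?thesis using w(2) by (cases rule: converse_rtranclE) auto
qed


lemma base: "Inv E s s [s] [s]"
  unfolding Inv_def using seps unfolding separating_def
  by (auto simp: le_less)

lemma Inv_hd: "Inv E s i A B \<Longrightarrow> hd A \<in> {s..i} \<and> hd B \<in> {s..i}"
  unfolding Inv_def by (metis UnI1 UnI2 list.set_sel(1))

lemma attach_left:
  assumes I: "Inv E s i A B" and si: "s \<le> i" and it: "Suc i < t" and e: "E (hd A) (Suc i)"
  shows "Inv E s (Suc i) (Suc i # A) B"
proof -
  have i1: "1 \<le> i" "i < n" "Suc i < n" using si s1 it tn by auto
  have hA: "hd A \<le> i" "hd B \<le> i" "s \<le> hd B" using Inv_hd[OF I] by auto
  have "set A \<union> set B = {s..i}" using InvD(8)[OF I] .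
  then have nin: "Suc i \<notin> set A" "Suc i \<notin> set B" by (metis UnI1 UnI2 atLeastAtMost_iff not_less_eq_eq order_refl)+
  obtain x y where xy: "E x y" "x < Suc i" "Suc i < y" using jump[of "Suc i"] si it by auto
  have P4: "ladj (Suc i # A) u v \<or> ladj B u v" if uv: "E u v" "s \<le> u" "u < v" "v \<le> Suc i" for u v
  proof (cases "v \<le> i")
    case True
    then have "ladj A u v \<or> ladj B u v" using InvD(9)[OF I uv(1,2,3)] by blast
    then show ?thesis using ladj_Cons by blast
  next
    case False
    then have v: "v = Suc i" using uv by simp
    then have "u = hd A \<or> u = hd B" using InvD(10)[OF I uv(1)] uv by simp
    moreover have "u = hd A" 
    proof (rule ccontr)
      assume "u \<noteq> hd A"
      then have "u = hd B" "u \<noteq> hd A" using calculation by auto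
      then show False using three[OF i1(1,2) e _ _ uv(1) _ _ xy(1)] hA xy v uv by auto
    qed
    moreover have "A = hd A # tl A" using InvD(1)[OF I] by simp
    ultimately show ?thesis using ladj_hd[of "Suc i" "hd A" "tl A"] v by (metis ladj_def)
  qed
  have P5: "u = Suc i \<or> u = hd B" if uv: "E u v" "u \<le> Suc i" "Suc i < v" for u v
  proof (cases "u = Suc i")
    case False
    then have "u \<le> i" using uv by simp
    then have "u = hd A \<or> u = hd B" using InvD(10)[OF I uv(1)] uv by simp
    moreover have "u = hd A \<Longrightarrow> hd A \<noteq> hd B \<Longrightarrow> False"
    proof -
      assume "u = hd A" "hd A \<noteq> hd B"
      then have "v = Suc i" using InvD(11)[OF I _ _ e] uv by simp
      then show False using uv by simp
    qed
    ultimately show ?thesis by auto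
  qed simp
  have P6a: "v = w" if "E (Suc i) v" "E (Suc i) w" "Suc i < v" "Suc i < w" for v w
  proof (rule ccontr)
    assume "v \<noteq> w"
    then show False using three[OF _ i1(3) that(1) _ _ that(2) _ _ xy(1)] that xy by auto
  qed
  have P6b: "v = w" if "E (hd B) v" "E (hd B) w" "Suc i < v" "Suc i < w" for v w
  proof (cases "hd A = hd B")
    case False
    then show ?thesis using InvD(12)[OF I False that(1,2)] that(3,4) by simp
  next
    case True
    show ?thesis
    proof (rule ccontr)
      assume "v \<noteq> w"
      then show False using three[OF i1(1,2) e _ _ that(1) _ _ that(2)] that hA True by auto
    qed
  qed
  show ?thesis
  proof (rule InvI)
    show "set (Suc i # A) \<inter> set B = {s}" using InvD(7)[OF I] nin by auto
    show "set (Suc i # A) \<union> set B = {s..Suc i}" using InvD(8)[OF I] si by auto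
    show "Suc i # A \<noteq> []" by simp
    show "B \<noteq> []" "last B = s" "distinct B" using InvD(2,4,6)[OF I] by auto
    show "last (Suc i # A) = s" using InvD(1,3)[OF I] by simp
    show "distinct (Suc i # A)" using InvD(5)[OF I] nin by simp
  qed (use P4 P5 P6a P6b in auto)
qed

lemma attach_free:
  assumes I: "Inv E s i A B" and si: "s \<le> i" and it: "Suc i < t"
    and nl: "\<not> (\<exists>u. E u (Suc i) \<and> u \<le> i)"
    and fr: "hd A = hd B \<or> (\<forall>v. E (hd A) v \<longrightarrow> v \<le> i)"
  shows "Inv E s (Suc i) (Suc i # A) B"
proof -
  have i1: "1 \<le> i" "i < n" "Suc i < n" using si s1 it tn by auto
  have hA: "hd A \<le> i" "hd B \<le> i" "s \<le> hd B" using Inv_hd[OF I] by auto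
  have "set A \<union> set B = {s..i}" using InvD(8)[OF I] .
  then have nin: "Suc i \<notin> set A" "Suc i \<notin> set B" by (metis UnI1 UnI2 atLeastAtMost_iff not_less_eq_eq order_refl)+
  obtain x y where xy: "E x y" "x < Suc i" "Suc i < y" using jump[of "Suc i"] si it by auto
  obtain w' where w': "E (Suc i) w'" using hasnbr[of "Suc i"] i1 by auto
  have w'': "Suc i < w'" using nl w' Esym[OF w'] Eirr[of "Suc i"]
    by (metis less_Suc_eq_le linorder_neqE_nat)
  have P4: "ladj (Suc i # A) u v \<or> ladj B u v" if uv: "E u v" "s \<le> u" "u < v" "v \<le> Suc i" for u v
  proof (cases "v \<le> i")
    case True
    then have "ladj A u v \<or> ladj B u v" using InvD(9)[OF I uv(1,2,3)] by blast
    then show ?thesis using ladj_Cons by blast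
  next
    case False
    then have v: "v = Suc i" using uv by simp
    then show ?thesis using nl uv by auto
  qed
  have P5: "u = Suc i \<or> u = hd B" if uv: "E u v" "u \<le> Suc i" "Suc i < v" for u v
  proof (cases "u = Suc i")
    case False
    then have "u \<le> i" using uv by simp
    then have "u = hd A \<or> u = hd B" using InvD(10)[OF I uv(1)] uv by simp
    then show ?thesis using fr uv by auto
  qed simp
  have P6a: "v = w" if "E (Suc i) v" "E (Suc i) w" "Suc i < v" "Suc i < w" for v w
  proof (rule ccontr)
    assume "v \<noteq> w"
    then show False using three[OF _ i1(3) that(1) _ _ that(2) _ _ xy(1)] that xy by auto
  qed
  have P6b: "v = w" if "E (hd B) v" "E (hd B) w" "Suc i < v" "Suc i < w" for v w
  proof (cases "hd A = hd B")
    case False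
    then show ?thesis using InvD(12)[OF I False that(1,2)] that(3,4) by simp
  next
    case True
    show ?thesis
    proof (rule ccontr)
      assume "v \<noteq> w"
      then show False using three[OF _ i1(3) that(1) _ _ that(2) _ _ w'] that hA w'' by auto
    qed
  qed
  show ?thesis
  proof (rule InvI)
    show "set (Suc i # A) \<inter> set B = {s}" using InvD(7)[OF I] nin by auto
    show "set (Suc i # A) \<union> set B = {s..Suc i}" using InvD(8)[OF I] si by auto
    show "Suc i # A \<noteq> []" by simp
    show "B \<noteq> []" "last B = s" "distinct B" using InvD(2,4,6)[OF I] by auto
    show "last (Suc i # A) = s" using InvD(1,3)[OF I] by simp
    show "distinct (Suc i # A)" using InvD(5)[OF I] nin by simp
  qed (use P4 P5 P6a P6b in auto)
qed


lemma step:
  assumes I: "Inv E s i A B" and si: "s \<le> i" and it: "Suc i < t"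
  shows "\<exists>A' B'. Inv E s (Suc i) A' B'"
proof (cases "\<exists>u. E u (Suc i) \<and> u \<le> i")
  case True
  then obtain u where u: "E u (Suc i)" "u \<le> i" by blast
  then have "u = hd A \<or> u = hd B" using InvD(10)[OF I u(1) u(2)] by simp
  then show ?thesis
  proof
    assume "u = hd A"
    then show ?thesis using attach_left[OF I si it] u by blast
  next
    assume "u = hd B"
    then have "Inv E s (Suc i) (Suc i # B) A" using attach_left[OF Inv_swap[OF I] si it] u by blast
    then show ?thesis using Inv_swap by blast
  qed
next
  case False
  note nl = False
  show ?thesis
  proof (cases "hd A = hd B \<or> (\<forall>v. E (hd A) v \<longrightarrow> v \<le> i)")
    case True
    then show ?thesis using attach_free[OF I si it nl] by blast
  next
    case F1: False
    show ?thesis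
    proof (cases "hd B = hd A \<or> (\<forall>v. E (hd B) v \<longrightarrow> v \<le> i)")
      case True
      then have "Inv E s (Suc i) (Suc i # B) A" using attach_free[OF Inv_swap[OF I] si it nl] by blast
      then show ?thesis using Inv_swap by blast
    next
      case F2: False
      have i1: "1 \<le> Suc i" "Suc i < n" using si s1 it tn by auto
      have hA: "hd A \<le> i" "hd B \<le> i" using Inv_hd[OF I] by auto
      obtain v1 where v1: "E (hd A) v1" "i < v1" using F1 by (meson not_le)
      obtain v2 where v2: "E (hd B) v2" "i < v2" using F2 by (meson not_le)
      have v1': "Suc i < v1" using v1 nl hA by (metis Suc_lessI)
      have v2': "Suc i < v2" using v2 nl hA by (metis Suc_lessI)
      obtain w' where w': "E (Suc i) w'" using hasnbr[of "Suc i"] i1 by auto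
      have w'': "Suc i < w'" using nl w' Esym[OF w'] Eirr[of "Suc i"]
        by (metis less_Suc_eq_le linorder_neqE_nat)
      have ne: "hd A \<noteq> hd B" using F1 by blast
      show ?thesis
        by (rule FalseE, rule three[OF i1 v1(1) _ v1' v2(1) _ v2' w' _ w''])
           (use hA ne in simp_all)
    qed
  qed
qed

lemma tracks_aux: "s + d < t \<Longrightarrow> \<exists>A B. Inv E s (s + d) A B"
proof (induction d)
  case 0
  then show ?case using base by auto
next
  case (Suc d)
  then obtain A B where "Inv E s (s + d) A B" by auto
  then show ?case using step[of "s + d" A B] Suc.prems by auto
qed

lemma block:
  assumes dn: "n < d"
  shows "\<exists>c. is_cycle c \<and> set c \<subseteq> {s..t} \<union> {d} \<and> s \<in> set c \<and> t \<in> set c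
    \<and> (\<forall>u v. E u v \<and> s \<le> u \<and> u \<le> t \<and> s \<le> v \<and> v \<le> t \<longrightarrow> cycle_adj c u v)"
proof -
  obtain A B where I: "Inv E s (t - 1) A B" using tracks_aux[of "t - 1 - s"] st by auto
  define A' where "A' = butlast A"
  define B' where "B' = butlast B"
  have A: "A = A' @ [s]" unfolding A'_def using InvD(1,3)[OF I] by (metis append_butlast_last_id)
  have B: "B = B' @ [s]" unfolding B'_def using InvD(2,4)[OF I] by (metis append_butlast_last_id)
  have dA: "distinct A" and dB: "distinct B" using InvD(5,6)[OF I] by auto
  have AB: "set A \<inter> set B = {s}" "set A \<union> set B = {s..t - 1}" using InvD(7,8)[OF I] by auto
  have sB': "s \<notin> set B'" using dB B by simp
  have dB': "distinct B'" using dB B by simp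
  have B'A: "set B' \<inter> set A = {}" using AB(1) sB' B by auto
  have sub: "set A \<subseteq> {s..t - 1}" "set B \<subseteq> {s..t - 1}" using AB(2) by blast+
  have sub2: "set B' \<subseteq> set B" using B by auto
  have "t \<notin> {s..t - 1}" using st by simp
  then have tA: "t \<notin> set A" "t \<notin> set B'" using sub sub2 by blast+
  have "{s..t - 1} \<subseteq> {s..t}" by simp
  then have rng: "set A \<subseteq> {s..t}" "set B' \<subseteq> {s..t}" using sub sub2 by blast+
  have dnot: "d \<notin> set A" "d \<notin> set B'" using rng tn dn by auto
  have dt: "d \<noteq> t" using tn dn by simp
  have revA: "rev A = s # rev A'" using A by simp
  define X where "X = (if A' = [] \<and> B' = [] then [d] else [])"
  define c where "c = rev A @ t # B' @ X"
  have c_alt: "c = rev A @ [t] @ (B' @ X)" unfolding c_def by simp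
  have hdc: "hd c = s" unfolding c_def revA by simp
  have cyc: "is_cycle c"
  proof -
    have "distinct c" unfolding c_def X_def using dA dB' B'A tA dnot dt by auto
    moreover have "length c \<ge> 3"
    proof (cases "A' = []")
      case True
      then show ?thesis unfolding c_def X_def revA by (cases B') auto
    next
      case False
      then show ?thesis unfolding c_def revA by (cases A') auto
    qed
    ultimately show ?thesis unfolding is_cycle_def by simp
  qed
  have setc: "set c \<subseteq> {s..t} \<union> {d}" unfolding c_def X_def using rng st by auto
  have sc: "s \<in> set c" "t \<in> set c" unfolding c_def revA by auto
  have adj: "cycle_adj c u v" if uv: "E u v" "s \<le> u" "u < v" "v \<le> t" for u v
  proof (cases "v \<le> t - 1")
    case True
    then have "ladj A u v \<or> ladj B u v" using InvD(9)[OF I uv(1,2,3)] by simp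
    then show ?thesis
    proof
      assume "ladj A u v"
      then have "ladj ([] @ rev A @ (t # B' @ X)) u v" by (rule ladj_append[OF ladj_rev])
      then show ?thesis unfolding c_def by (intro ladj_cycle) simp
    next
      assume "ladj B u v"
      then have "ladj B' u v \<or> (B' \<noteq> [] \<and> ((u = last B' \<and> v = s) \<or> (u = s \<and> v = last B')))"
        using ladj_snoc[of B' s u v] B \<open>ladj B u v\<close> by simp
      then show ?thesis
      proof
        assume "ladj B' u v"
        then have "ladj ((rev A @ [t]) @ B' @ X) u v" by (rule ladj_append)
        then show ?thesis unfolding c_def by (intro ladj_cycle) simp
      next
        assume h: "B' \<noteq> [] \<and> ((u = last B' \<and> v = s) \<or> (u = s \<and> v = last B'))"
        then have "X = []" unfolding X_def by simp
        then have "last c = last B'" using h unfolding c_def by simp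
        moreover have "c \<noteq> []" unfolding c_def by simp
        ultimately have "cycle_adj c (last B') s" using cycle_wrap[of c] hdc by metis
        then show ?thesis using h cycle_adj_sym by metis
      qed
    qed
  next
    case False
    then have vt: "v = t" using uv by simp
    then have "u = hd A \<or> u = hd B" using InvD(10)[OF I uv(1)] uv st by simp
    then show ?thesis
    proof
      assume u: "u = hd A"
      have "rev A \<noteq> []" using A by simp
      then have "ladj (rev A @ [t] @ (B' @ X)) (last (rev A)) t" by (rule ladj_last)
      moreover have "last (rev A) = hd A" using A by (simp add: last_rev)
      ultimately have "ladj (rev A @ [t] @ (B' @ X)) u v" using u vt by simp
      then have "ladj c u v" using c_alt by simp
      then show ?thesis by (rule ladj_cycle)
    next
      assume u: "u = hd B"
      show ?thesis
      proof (cases "B' = []")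
        case False
        then have e: "t # B' @ X = t # hd B' # (tl B' @ X)" by simp
        have "ladj (t # B' @ X) t (hd B')" unfolding e by (rule ladj_hd)
        then have "ladj (rev A @ (t # B' @ X) @ []) t (hd B')" by (rule ladj_append)
        moreover have "hd B = hd B'" using B False by simp
        ultimately have "ladj c t u" using u unfolding c_def by simp
        then show ?thesis using vt ladj_cycle cycle_adj_sym by metis
      next
        case True
        then have us: "u = s" using u B by simp
        show ?thesis
        proof (cases "A' = []")
          case True
          then have "c = [s, t, d]" unfolding c_def X_def using \<open>B' = []\<close> A by simp
          then have "ladj c s t" using ladj_hd[of s t "[d]"] by simp
          then show ?thesis using us vt by (simp add: ladj_cycle)
        next
          case False
          then have "c = rev A @ [t]" unfolding c_def X_def using \<open>B' = []\<close> by simp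
          then have "last c = t" "c \<noteq> []" by simp_all
          then have "cycle_adj c t s" using cycle_wrap[of c] hdc by metis
          then show ?thesis using us vt cycle_adj_sym by metis
        qed
      qed
    qed
  qed
  have "cycle_adj c u v" if uv: "E u v" "s \<le> u" "u \<le> t" "s \<le> v" "v \<le> t" for u v
  proof (cases "u < v")
    case True
    then show ?thesis using adj uv by blast
  next
    case False
    then have "v < u" using uv(1) Eirr by (metis linorder_neqE_nat)
    then show ?thesis using adj[OF Esym[OF uv(1)]] uv cycle_adj_sym by metis
  qed
  then show ?thesis using cyc setc sc by blast
qed

end

lemma step_find: "(f::nat \<Rightarrow> nat) 0 \<le> u \<Longrightarrow> u < f m \<Longrightarrow> \<exists>j<m. f j \<le> u \<and> u < f (Suc j)"
proof (induction m)
  case 0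
  then show ?case by simp
next
  case (Suc m)
  show ?case
  proof (cases "u < f m")
    case True
    then obtain j where "j < m" "f j \<le> u" "u < f (Suc j)" using Suc.IH Suc.prems by blast
    then show ?thesis by (intro exI[of _ j]) simp
  next
    case False
    then show ?thesis using Suc.prems by (intro exI[of _ m]) simp
  qed
qed

theorem mainTheorem4:
  fixes n k :: nat and E :: "nat \<Rightarrow> nat \<Rightarrow> bool"
  assumes "k \<ge> 2" and "n \<ge> 2"
    and "graph_on n E" and "connected_on n E"
    and "\<forall>i\<in>{1..n-1}. card {(u, v). E u v \<and> u \<le> i \<and> i < v} \<le> 2"
    and "card {i\<in>{1..n}. separating E i} = k"
  shows "\<exists>(Z :: nat list list) a b. chain_of_cycles (k - 1) Z a b
           \<and> subgraph_of_chain n E (k - 1) Z a b"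
proof -
  note G = assms(3)
  have Gr: "\<forall>u v. E u v \<longrightarrow> u \<in> {1..n} \<and> v \<in> {1..n}"
    using conjunct2[OF conjunct2[OF G[unfolded graph_on_def]]] .
  have Gs: "\<forall>u v. E u v \<longrightarrow> E v u" using conjunct1[OF G[unfolded graph_on_def]] .
  have Gi: "\<forall>u. \<not> E u u" using conjunct1[OF conjunct2[OF G[unfolded graph_on_def]]] .
  define S where "S = {i\<in>{1..n}. separating E i}"
  define sl where "sl = sorted_list_of_set S"
  have finS: "finite S" unfolding S_def by simp
  have len: "length sl = k" unfolding sl_def using assms(6) finS S_def by simp
  have setsl: "set sl = S" unfolding sl_def using finS by simp
  have ss: "sorted_wrt (<) sl" unfolding sl_def by (rule strict_sorted_list_of_set)
  have mono: "sl ! i < sl ! j" if "i < j" "j < k" for i j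
    using sorted_wrt_nth_less[OF ss that(1)] that(2) len by simp
  have monole: "sl ! i \<le> sl ! j" if "i \<le> j" "j < k" for i j
    using mono[of i j] that by (cases "i = j") auto
  have inS: "sl ! i \<in> S" if "i < k" for i using that len setsl nth_mem by blast
  have Srng: "x \<in> S \<Longrightarrow> 1 \<le> x \<and> x \<le> n \<and> separating E x" for x unfolding S_def by simp
  have idx: "\<exists>p<k. sl ! p = x" if "x \<in> S" for x using that setsl len by (metis in_set_conv_nth)
  have sep1: "separating E 1" unfolding separating_def using Gr by fastforce
  have sepn: "separating E n" unfolding separating_def using Gr by fastforce
  have k2: "2 \<le> k" using assms(1) .
  have sl0: "sl ! 0 = 1"
  proof -
    have "1 \<in> S" unfolding S_def using sep1 assms(2) by simp
    then obtain p where "p < k" "sl ! p = 1" using idx by blast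
    then have "sl ! 0 \<le> 1" using monole[of 0 p] by simp
    moreover have "1 \<le> sl ! 0" using Srng[OF inS[of 0]] k2 by simp
    ultimately show ?thesis by simp
  qed
  have sllast: "sl ! (k - 1) = n"
  proof -
    have "n \<in> S" unfolding S_def using sepn assms(2) by simp
    then obtain p where "p < k" "sl ! p = n" using idx by blast
    then have "n \<le> sl ! (k - 1)" using monole[of p "k - 1"] k2 by simp
    moreover have "sl ! (k - 1) \<le> n" using Srng[OF inS[of "k - 1"]] k2 by simp
    ultimately show ?thesis by simp
  qed
  have blkj: "blk n E (sl ! j) (sl ! Suc j)" if j: "j < k - 1" for j
  proof
    show "graph_on n E" by (rule G)
    show "connected_on n E" by (rule assms(4))
    show "\<forall>i\<in>{1..n-1}. card {(u, v). E u v \<and> u \<le> i \<and> i < v} \<le> 2" by (rule assms(5))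
    show "1 \<le> sl ! j" using Srng[OF inS[of j]] j by simp
    show "sl ! j < sl ! Suc j" using mono[of j "Suc j"] j by simp
    show "sl ! Suc j \<le> n" using Srng[OF inS[of "Suc j"]] j by simp
    show "separating E (sl ! j)" using Srng[OF inS[of j]] j by simp
    show "separating E (sl ! Suc j)" using Srng[OF inS[of "Suc j"]] j by simp
    show "\<forall>i. sl ! j < i \<longrightarrow> i < sl ! Suc j \<longrightarrow> \<not> separating E i"
    proof (intro allI impI notI)
      fix i assume i: "sl ! j < i" "i < sl ! Suc j" "separating E i"
      have "1 \<le> sl ! j" "sl ! Suc j \<le> n" using Srng[OF inS[of j]] Srng[OF inS[of "Suc j"]] j by auto
      then have "i \<in> S" unfolding S_def using i by simp
      then obtain p where p: "p < k" "sl ! p = i" using idx by blast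
      have "j < p"
      proof (rule ccontr)
        assume "\<not> j < p"
        then have "sl ! p \<le> sl ! j" using monole[of p j] j by simp
        then show False using i p by simp
      qed
      moreover have "p < Suc j"
      proof (rule ccontr)
        assume "\<not> p < Suc j"
        then have "sl ! Suc j \<le> sl ! p" using monole[of "Suc j" p] p by simp
        then show False using i p by simp
      qed
      ultimately show False by simp
    qed
  qed
  define P where "P = (\<lambda>j c. is_cycle c \<and> set c \<subseteq> {sl ! j..sl ! Suc j} \<union> {n + 1 + j}
      \<and> sl ! j \<in> set c \<and> sl ! Suc j \<in> set c
      \<and> (\<forall>u v. E u v \<and> sl ! j \<le> u \<and> u \<le> sl ! Suc j \<and> sl ! j \<le> v \<and> v \<le> sl ! Suc j \<longrightarrow> cycle_adj c u v))"
  have "\<forall>j. j < k - 1 \<longrightarrow> (\<exists>c. P j c)"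
  proof (intro allI impI)
    fix j assume "j < k - 1"
    then show "\<exists>c. P j c" unfolding P_def using blk.block[OF blkj, of j "n + 1 + j"] by simp
  qed
  then obtain cf where cf: "\<And>j. j < k - 1 \<Longrightarrow> P j (cf j)" by (metis choice_iff')
  define Z where "Z = map cf [0..<k - 1]"
  define a where "a = (\<lambda>j. sl ! j)"
  define b where "b = (\<lambda>j. sl ! Suc j)"
  have Zj: "Z ! j = cf j" if "j < k - 1" for j unfolding Z_def using that by simp
  have slbd: "sl ! j \<le> n" if "j < k" for j using Srng[OF inS[OF that]] by simp
  have setcf: "set (cf j) \<subseteq> {sl ! j..sl ! Suc j} \<union> {n + 1 + j}" if "j < k - 1" for j
    using cf[OF that] unfolding P_def by blast
  have chain: "chain_of_cycles (k - 1) Z a b"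
    unfolding chain_of_cycles_def
  proof (intro conjI allI impI)
    show "length Z = k - 1" unfolding Z_def by simp
    fix j assume j: "j < k - 1"
    show "is_cycle (Z ! j)" "a j \<in> set (Z ! j)" "b j \<in> set (Z ! j)"
      using cf[OF j] Zj[OF j] unfolding P_def a_def b_def by auto
  next
    fix i j assume ij: "i < k - 1" "j < k - 1" "i + 1 < j \<or> j + 1 < i"
    show "set (Z ! i) \<inter> set (Z ! j) = {}"
    proof (rule ccontr)
      assume "set (Z ! i) \<inter> set (Z ! j) \<noteq> {}"
      then obtain x where x: "x \<in> set (cf i)" "x \<in> set (cf j)" using Zj ij by auto
      have xi: "x \<in> {sl ! i..sl ! Suc i} \<union> {n + 1 + i}" using x(1) setcf[OF ij(1)] by blast
      have xj: "x \<in> {sl ! j..sl ! Suc j} \<union> {n + 1 + j}" using x(2) setcf[OF ij(2)] by blast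
      have bi: "sl ! Suc i \<le> n" "sl ! Suc j \<le> n" using slbd ij by auto
      show False
      proof (cases "x \<le> n")
        case True
        then have "x \<in> {sl ! i..sl ! Suc i}" "x \<in> {sl ! j..sl ! Suc j}" using xi xj by auto
        moreover have "sl ! Suc i < sl ! j \<or> sl ! Suc j < sl ! i"
          using ij(3)
        proof
          assume "i + 1 < j" then show ?thesis using ij mono[of "Suc i" j] by simp
        next
          assume "j + 1 < i" then show ?thesis using ij mono[of "Suc j" i] by simp
        qed
        ultimately show False by auto
      next
        case False
        then have "x = n + 1 + i" "x = n + 1 + j" using xi xj bi by auto
        then show False using ij by simp
      qed
    qed
  next
    fix j assume j: "j + 1 < k - 1"
    have j1: "j < k - 1" "Suc j < k - 1" using j by auto
    show "{b j} = {a (j + 1)}" unfolding a_def b_def by simp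
    show "set (Z ! j) \<inter> set (Z ! (j + 1)) = {b j}"
    proof
      show "{b j} \<subseteq> set (Z ! j) \<inter> set (Z ! (j + 1))"
        using cf[OF j1(1)] cf[OF j1(2)] Zj j1 unfolding P_def b_def by auto
      show "set (Z ! j) \<inter> set (Z ! (j + 1)) \<subseteq> {b j}"
      proof
        fix x assume "x \<in> set (Z ! j) \<inter> set (Z ! (j + 1))"
        then have x: "x \<in> set (cf j)" "x \<in> set (cf (Suc j))" using Zj j1 by auto
        have xi: "x \<in> {sl ! j..sl ! Suc j} \<union> {n + 1 + j}" using x(1) setcf[OF j1(1)] by blast
        have xj: "x \<in> {sl ! Suc j..sl ! Suc (Suc j)} \<union> {n + 1 + Suc j}" using x(2) setcf[OF j1(2)] by blast
        have bi: "sl ! Suc j \<le> n" "sl ! Suc (Suc j) \<le> n" using slbd j1 by auto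
        show "x \<in> {b j}"
        proof (cases "x \<le> n")
          case True
          then have "x \<in> {sl ! j..sl ! Suc j}" "x \<in> {sl ! Suc j..sl ! Suc (Suc j)}" using xi xj by auto
          then show ?thesis unfolding b_def by auto
        next
          case False
          then have "x = n + 1 + j" "x = n + 1 + Suc j" using xi xj bi by auto
          then show ?thesis by simp
        qed
      qed
    qed
  qed
  have sub: "subgraph_of_chain n E (k - 1) Z a b"
    unfolding subgraph_of_chain_def
  proof (rule exI[of _ id], intro conjI allI impI)
    show "inj_on id {1..n}" by simp
    show "id 1 = a 0" unfolding a_def using sl0 by simp
    show "id n = b (k - 1 - 1)" unfolding b_def using sllast k2 by (simp add: Suc_diff_Suc)
    fix u v assume e: "E u v"
    show "\<exists>j<k - 1. cycle_adj (Z ! j) (id u) (id v)"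
    proof -
      have key: "\<exists>j<k - 1. cycle_adj (Z ! j) u v" if e': "E u v" "u < v" for u v
      proof -
        have r: "1 \<le> u" "v \<le> n" using Gr e' by auto
        have "sl ! 0 \<le> u" "u < sl ! (k - 1)" using sl0 sllast r e' by auto
        then obtain j where j: "j < k - 1" "sl ! j \<le> u" "u < sl ! Suc j"
          using step_find[of "\<lambda>j. sl ! j" u "k - 1"] by auto
        have "v \<le> sl ! Suc j"
        proof (rule ccontr)
          assume "\<not> v \<le> sl ! Suc j"
          then have "u < sl ! Suc j" "sl ! Suc j < v" using j by auto
          moreover have "separating E (sl ! Suc j)" using Srng[OF inS[of "Suc j"]] j by simp
          ultimately show False using e' unfolding separating_def by blast
        qed
        then have "cycle_adj (cf j) u v" using cf[OF j(1)] e' j unfolding P_def by auto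
        then show ?thesis using Zj j by auto
      qed
      have "u \<noteq> v" using e Gi by auto
      then show ?thesis
      proof (cases "u < v")
        case True
        then show ?thesis using key[OF e] by simp
      next
        case False
        then have "v < u" using \<open>u \<noteq> v\<close> by simp
        then obtain j where "j < k - 1" "cycle_adj (Z ! j) v u" using key[of v u] Gs e by blast
        then show ?thesis using cycle_adj_sym by (metis id_apply)
      qed
    qed
  qed
  show ?thesis using chain sub by blast
qed

end
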